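(* Let $f:\{0,1\}^n\to\{0,1\}$ be a boolean function such that $f(x)=f(\bar x)$ for all $x\in\{0,1\}^n$, where $\bar x$ is the bitwise negation of $x$. Then $Q_E^{na}(f)\le n-1$.
   Context: Nonadaptive exact quantum query model: let $\mathcal H_{\rm in}$ have orthonormal basis $|0\rangle,\dots,|n\rangle$ and let the oracle $O_x$ act by $|i\rangle\mapsto(-1)^{x_i}|i\rangle$ with convention $x_0=0$. A nonadaptive quantum algorithm making $k$ queries consists of an input-independent state $|\psi\rangle\in\mathcal H_{\rm in}^{\otimes k}\otimes\mathcal H_{\rm work}$ (with $\mathcal H_{\rm work}$ a finite-dimensional workspace), to which $O_x^{\otimes k}\otimes I$ is applied, followed by an input-independent two-outcome measurement with outcomes labelled $0,1$. It computes $f$ exactly if for every $x$ the outcome is $f(x)$ with probability $1$. $Q_E^{na}(f)$ is the minimum such $k$. *)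

theory Defs
  imports Complex_Main
begin

text \<open>Inputs x in {0,1}^n are bool lists of length n (True = 1); x_i = x ! (i-1) for 1 <= i <= n,
  and x_0 = 0.  The space H_in^{(x)k} (x) H_work has orthonormal basis indexed by pairs
  (is, w) with is a list of k query indices in {0..n} and w < d (workspace of dimension d).
  Vectors are functions from basis labels to complex numbers (only values on the basis set matter).\<close>

type_synonym qlabel = "nat list \<times> nat"

definition qbasis :: "nat \<Rightarrow> nat \<Rightarrow> nat \<Rightarrow> qlabel set" where
  "qbasis n k d = {(is, w). length is = k \<and> (\<forall>j\<in>set is. j \<le> n) \<and> w < d}"

definition input_bit :: "bool list \<Rightarrow> nat \<Rightarrow> bool" where
  "input_bit x i = (if i = 0 then False else x ! (i - 1))"

text \<open>O_x^{(x)k} (x) I is diagonal: |i_1..i_k, w> maps to prod_j (-1)^{x_{i_j}} |i_1..i_k, w>.\<close>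
definition oracle_phase :: "bool list \<Rightarrow> nat list \<Rightarrow> complex" where
  "oracle_phase x is = (\<Prod>j\<leftarrow>is. if input_bit x j then -1 else 1)"

definition apply_oracle :: "bool list \<Rightarrow> (qlabel \<Rightarrow> complex) \<Rightarrow> qlabel \<Rightarrow> complex" where
  "apply_oracle x \<psi> = (\<lambda>(is, w). oracle_phase x is * \<psi> (is, w))"

definition mat_apply :: "qlabel set \<Rightarrow> (qlabel \<Rightarrow> qlabel \<Rightarrow> complex) \<Rightarrow> (qlabel \<Rightarrow> complex) \<Rightarrow> qlabel \<Rightarrow> complex" where
  "mat_apply B M \<psi> = (\<lambda>b. \<Sum>c\<in>B. M b c * \<psi> c)"

definition is_projector :: "qlabel set \<Rightarrow> (qlabel \<Rightarrow> qlabel \<Rightarrow> complex) \<Rightarrow> bool" where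
  "is_projector B P \<longleftrightarrow>
     (\<forall>b\<in>B. \<forall>c\<in>B. P c b = cnj (P b c)) \<and>
     (\<forall>b\<in>B. \<forall>c\<in>B. (\<Sum>e\<in>B. P b e * P e c) = P b c)"

definition sq_norm_on :: "qlabel set \<Rightarrow> (qlabel \<Rightarrow> complex) \<Rightarrow> real" where
  "sq_norm_on B v = (\<Sum>b\<in>B. (cmod (v b))\<^sup>2)"

definition prob_outcome :: "qlabel set \<Rightarrow> (qlabel \<Rightarrow> qlabel \<Rightarrow> complex) \<Rightarrow> (qlabel \<Rightarrow> complex) \<Rightarrow> bool \<Rightarrow> real" where
  "prob_outcome B P \<psi> r =
     (if r then sq_norm_on B (mat_apply B P \<psi>)
      else sq_norm_on B (\<lambda>b. \<psi> b - mat_apply B P \<psi> b))"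

definition na_exact_alg :: "nat \<Rightarrow> (bool list \<Rightarrow> bool) \<Rightarrow> nat \<Rightarrow> nat \<Rightarrow> (qlabel \<Rightarrow> complex)
    \<Rightarrow> (qlabel \<Rightarrow> qlabel \<Rightarrow> complex) \<Rightarrow> bool" where
  "na_exact_alg n f k d \<psi> P \<longleftrightarrow>
     sq_norm_on (qbasis n k d) \<psi> = 1 \<and>
     is_projector (qbasis n k d) P \<and>
     (\<forall>x. length x = n \<longrightarrow> prob_outcome (qbasis n k d) P (apply_oracle x \<psi>) (f x) = 1)"

definition computes_na :: "nat \<Rightarrow> (bool list \<Rightarrow> bool) \<Rightarrow> nat \<Rightarrow> bool" where
  "computes_na n f k \<longleftrightarrow> (\<exists>d \<psi> P. na_exact_alg n f k d \<psi> P)"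

definition QE_na :: "nat \<Rightarrow> (bool list \<Rightarrow> bool) \<Rightarrow> nat" where
  "QE_na n f = (LEAST k. computes_na n f k)"

end

theory Submission
  imports Defs
begin

lemma sum_prod_lists:
  fixes h :: "nat \<Rightarrow> 'a \<Rightarrow> real"
  assumes "finite A"
  shows "(\<Sum>is\<in>{is. length is = k \<and> (\<forall>j\<in>set is. j \<in> A)}. \<Prod>j<k. h j (is!j)) = (\<Prod>j<k. \<Sum>a\<in>A. h j a)"
proof (induction k arbitrary: h)
  case 0
  have "{is::'a list. length is = 0 \<and> (\<forall>j\<in>set is. j \<in> A)} = {[]}" by auto
  then show ?case by simp
next
  case (Suc k)
  let ?L = "\<lambda>k. {is::'a list. length is = k \<and> (\<forall>j\<in>set is. j \<in> A)}"
  have eq: "?L (Suc k) = (\<lambda>(a,is). a#is) ` (A \<times> ?L k)"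
  proof (rule set_eqI, rule iffI)
    fix x assume "x \<in> ?L (Suc k)"
    then obtain a t where "x = a # t" "a \<in> A" "t \<in> ?L k" by (cases x) auto
    then show "x \<in> (\<lambda>(a,is). a#is) ` (A \<times> ?L k)" by force
  qed auto
  have inj: "inj_on (\<lambda>(a,is). a#is) (A \<times> ?L k)" by (auto simp: inj_on_def)
  have fin: "finite (?L k)"
  proof -
    have "?L k \<subseteq> {xs. set xs \<subseteq> A \<and> length xs = k}" by auto
    then show ?thesis using finite_lists_length_eq[OF assms] finite_subset by blast
  qed
  have "(\<Sum>is\<in>?L (Suc k). \<Prod>j<Suc k. h j (is!j))
      = (\<Sum>p\<in>A \<times> ?L k. \<Prod>j<Suc k. h j ((fst p # snd p)!j))"
    unfolding eq by (subst sum.reindex[OF inj]) (simp add: case_prod_beta)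
  also have "\<dots> = (\<Sum>p\<in>A \<times> ?L k. h 0 (fst p) * (\<Prod>j<k. h (Suc j) (snd p ! j)))"
    by (simp only: prod.lessThan_Suc_shift nth_Cons_0 nth_Cons_Suc)
  also have "\<dots> = (\<Sum>a\<in>A. \<Sum>t\<in>?L k. h 0 a * (\<Prod>j<k. h (Suc j) (t ! j)))"
    by (simp add: sum.cartesian_product case_prod_beta)
  also have "\<dots> = (\<Sum>a\<in>A. h 0 a * (\<Prod>j<k. \<Sum>b\<in>A. h (Suc j) b))"
    by (simp add: sum_distrib_left[symmetric] Suc.IH[of "\<lambda>j. h (Suc j)"])
  also have "\<dots> = (\<Prod>j<Suc k. \<Sum>a\<in>A. h j a)"
    by (simp only: prod.lessThan_Suc_shift sum_distrib_right)
  finally show ?case .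
qed

definition ur :: "nat \<Rightarrow> bool list \<Rightarrow> nat \<Rightarrow> nat \<Rightarrow> real" where
  "ur n y j i = (if i = Suc j then (if y!j then -1 else 1) else if i = n then 1 else 0) / sqrt 2"

definition phi :: "nat \<Rightarrow> nat \<Rightarrow> bool list \<Rightarrow> qlabel \<Rightarrow> complex" where
  "phi n k y b = complex_of_real (\<Prod>j<k. ur n y j (fst b ! j))"

lemma ur_inner:
  assumes "Suc j < n"
  shows "(\<Sum>i\<in>{..n}. ur n y j i * ur n z j i) = (if y!j = z!j then 1 else 0)"
proof -
  have s2: "sqrt 2 * sqrt 2 = (2::real)" by simp
  have "\<And>i. ur n y j i * ur n z j i =
     (if i = Suc j then (if y!j = z!j then 1/2 else -1/2) else 0) + (if i = n then 1/2 else 0)"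
    using assms s2 by (auto simp: ur_def)
  then have "(\<Sum>i\<in>{..n}. ur n y j i * ur n z j i) =
     (\<Sum>i\<in>{..n}. (if i = Suc j then (if y!j = z!j then 1/2 else -1/2) else 0::real)) + (\<Sum>i\<in>{..n}. (if i = n then 1/2 else 0))"
    by (simp add: sum.distrib)
  also have "\<dots> = (if y!j = z!j then 1 else 0)" using assms by simp
  finally show ?thesis .
qed

lemma real_orth:
  assumes "length y = k" "length z = k" "\<forall>j<k. Suc j < n"
  shows "(\<Sum>is\<in>{is. length is = k \<and> (\<forall>j\<in>set is. j \<in> {..n})}.
      (\<Prod>j<k. ur n y j (is!j)) * (\<Prod>j<k. ur n z j (is!j))) = (if y = z then 1 else 0)"
proof -
  have "(\<Sum>is\<in>{is. length is = k \<and> (\<forall>j\<in>set is. j \<in> {..n})}.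
      (\<Prod>j<k. ur n y j (is!j)) * (\<Prod>j<k. ur n z j (is!j)))
    = (\<Sum>is\<in>{is. length is = k \<and> (\<forall>j\<in>set is. j \<in> {..n})}.
      (\<Prod>j<k. (\<lambda>j i. ur n y j i * ur n z j i) j (is!j)))"
    by (simp add: prod.distrib)
  also have "\<dots> = (\<Prod>j<k. \<Sum>i\<in>{..n}. ur n y j i * ur n z j i)"
    by (rule sum_prod_lists) simp
  also have "\<dots> = (\<Prod>j<k. (if y!j = z!j then 1 else 0))"
    using assms(3) by (intro prod.cong refl ur_inner) simp
  also have "\<dots> = (if y = z then 1 else 0)"
  proof (cases "y = z")
    case True then show ?thesis by simp
  next
    case False
    have "\<exists>j<k. y!j \<noteq> z!j"
    proof (rule ccontr)
      assume "\<not> (\<exists>j<k. y!j \<noteq> z!j)"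
      then have "y = z" using assms(1,2) by (intro nth_equalityI) auto
      then show False using False by simp
    qed
    then obtain j where "j < k" "y!j \<noteq> z!j" by blast
    then have "(\<Prod>j<k. (if y!j = z!j then 1 else 0::real)) = 0"
      by (intro prod_zero) (auto intro!: bexI[of _ j])
    then show ?thesis using False by simp
  qed
  finally show ?thesis .
qed

lemma qbasis1: "qbasis n k 1 = (\<lambda>is. (is, 0)) ` {is. length is = k \<and> (\<forall>j\<in>set is. j \<in> {..n})}"
proof (rule set_eqI)
  fix b :: qlabel
  obtain ks w where bw: "b = (ks, w)" by (cases b)
  show "b \<in> qbasis n k 1 \<longleftrightarrow> b \<in> (\<lambda>is. (is, 0)) ` {is. length is = k \<and> (\<forall>j\<in>set is. j \<in> {..n})}"
    unfolding bw qbasis_def by auto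
qed

lemma sum_qbasis1:
  "(\<Sum>b\<in>qbasis n k 1. F b) = (\<Sum>is\<in>{is. length is = k \<and> (\<forall>j\<in>set is. j \<in> {..n})}. F (is, 0))"
  unfolding qbasis1 by (subst sum.reindex) (auto simp: inj_on_def)

lemma cnj_phi[simp]: "cnj (phi n k y b) = phi n k y b"
  by (simp add: phi_def)

lemma phi_real: "phi n k y b = complex_of_real (\<Prod>j<k. ur n y j (fst b ! j))"
  by (simp add: phi_def)

lemma orth:
  assumes "length y = k" "length z = k" "\<forall>j<k. Suc j < n"
  shows "(\<Sum>b\<in>qbasis n k 1. cnj (phi n k y b) * phi n k z b) = (if y = z then 1 else 0)"
proof -
  let ?R = "\<lambda>b::qlabel. (\<Prod>j<k. ur n y j (fst b ! j)) * (\<Prod>j<k. ur n z j (fst b ! j))"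
  have "(\<Sum>b\<in>qbasis n k 1. cnj (phi n k y b) * phi n k z b)
     = (\<Sum>b\<in>qbasis n k 1. complex_of_real (?R b))"
    unfolding cnj_phi unfolding phi_real of_real_mult by (rule refl)
  also have "\<dots> = complex_of_real (\<Sum>b\<in>qbasis n k 1. ?R b)"
    by (rule of_real_sum[symmetric])
  also have "(\<Sum>b\<in>qbasis n k 1. ?R b) = (\<Sum>is\<in>{is. length is = k \<and> (\<forall>j\<in>set is. j \<in> {..n})}.
      (\<Prod>j<k. ur n y j (is!j)) * (\<Prod>j<k. ur n z j (is!j)))"
    unfolding sum_qbasis1 fst_conv by (rule refl)
  also have "\<dots> = (if y = z then 1 else 0)" by (rule real_orth[OF assms])
  finally show ?thesis by simp
qed

lemma norm1:
  assumes "length y = k" "\<forall>j<k. Suc j < n" "cmod s = 1"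
  shows "sq_norm_on (qbasis n k 1) (\<lambda>b. s * phi n k y b) = 1"
proof -
  have "\<And>b::qlabel. (cmod (s * phi n k y b))\<^sup>2 = Re (cnj (phi n k y b) * phi n k y b)"
  proof -
    fix b :: qlabel
    define r where "r = (\<Prod>j<k. ur n y j (fst b ! j))"
    have p: "phi n k y b = complex_of_real r" unfolding r_def by (rule phi_real)
    show "(cmod (s * phi n k y b))\<^sup>2 = Re (cnj (phi n k y b) * phi n k y b)"
      unfolding p using assms(3) by (simp add: norm_mult power2_eq_square)
  qed
  then have "sq_norm_on (qbasis n k 1) (\<lambda>b. s * phi n k y b)
     = (\<Sum>b\<in>qbasis n k 1. Re (cnj (phi n k y b) * phi n k y b))"
    by (simp add: sq_norm_on_def)
  also have "\<dots> = Re (\<Sum>b\<in>qbasis n k 1. cnj (phi n k y b) * phi n k y b)"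
    by simp
  also have "\<dots> = 1" using orth[OF assms(1) assms(1) assms(2)] by simp
  finally show ?thesis .
qed

lemma prod_list_nth: "prod_list (map F xs) = (\<Prod>j<length xs. F (xs!j))"
  by (induction xs) (simp_all add: prod.lessThan_Suc_shift del: prod.lessThan_Suc)

lemma factor_eq:
  assumes "Suc j < n" "\<not> zs ! j" "ys ! j = (x ! j \<noteq> input_bit x n)"
  shows "(if input_bit x i then -1 else 1::complex) * complex_of_real (ur n zs j i)
     = (if input_bit x n then -1 else 1) * complex_of_real (ur n ys j i)"
  using assms by (auto simp: ur_def input_bit_def)

theorem corollary7p4:
  fixes n :: nat and f :: "bool list \<Rightarrow> bool"
  assumes "\<forall>x. length x = n \<longrightarrow> f x = f (map Not x)"
  shows "QE_na n f \<le> n - 1"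
proof -
  define k where "k = n - 1"
  define B where "B = qbasis n k 1"
  define g where "g y = f (take n (y @ [False]))" for y
  define Y where "Y = {y. length y = k \<and> g y}"
  define P where "P b c = (\<Sum>y\<in>Y. phi n k y b * cnj (phi n k y c))" for b c
  define Z where "Z = replicate k False"
  define \<psi> where "\<psi> = phi n k Z"
  have hk: "\<forall>j<k. Suc j < n" unfolding k_def by auto
  have finY: "finite Y"
  proof -
    have "Y \<subseteq> {xs. set xs \<subseteq> (UNIV::bool set) \<and> length xs = k}" unfolding Y_def by auto
    then show ?thesis using finite_lists_length_eq[of "UNIV::bool set" k] finite_subset by auto
  qed
  have matP: "mat_apply B P (\<lambda>b. s * phi n k z b) = (\<lambda>b. if z \<in> Y then s * phi n k z b else 0)"
    if lz: "length z = k" for z s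
  proof
    fix b
    have "mat_apply B P (\<lambda>b. s * phi n k z b) b
        = (\<Sum>c\<in>B. \<Sum>y\<in>Y. (phi n k y b * s) * (cnj (phi n k y c) * phi n k z c))"
      unfolding mat_apply_def P_def by (simp add: sum_distrib_left sum_distrib_right mult_ac)
    also have "\<dots> = (\<Sum>y\<in>Y. \<Sum>c\<in>B. (phi n k y b * s) * (cnj (phi n k y c) * phi n k z c))"
      by (rule sum.swap)
    also have "\<dots> = (\<Sum>y\<in>Y. (phi n k y b * s) * (\<Sum>c\<in>B. cnj (phi n k y c) * phi n k z c))"
      by (simp add: sum_distrib_left)
    also have "\<dots> = (\<Sum>y\<in>Y. (phi n k y b * s) * (if y = z then 1 else 0))"
      unfolding B_def using orth[OF _ lz hk] by (intro sum.cong) (auto simp: Y_def)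
    also have "\<dots> = (\<Sum>y\<in>Y. if y = z then phi n k z b * s else 0)"
      by (intro sum.cong) auto
    also have "\<dots> = (if z \<in> Y then s * phi n k z b else 0)"
      using finY by (simp add: sum.delta' mult.commute)
    finally show "mat_apply B P (\<lambda>b. s * phi n k z b) b = (if z \<in> Y then s * phi n k z b else 0)" .
  qed
  have herm: "\<forall>b\<in>B. \<forall>c\<in>B. P c b = cnj (P b c)"
    by (simp add: P_def mult.commute)
  have idem: "\<forall>b\<in>B. \<forall>c\<in>B. (\<Sum>e\<in>B. P b e * P e c) = P b c"
  proof (intro ballI)
    fix b c
    have "(\<Sum>e\<in>B. P b e * P e c) = (\<Sum>e\<in>B. \<Sum>z\<in>Y. cnj (phi n k z c) * (P b e * (1 * phi n k z e)))"
      unfolding P_def[of _ c] by (simp add: sum_distrib_left mult_ac)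
    also have "\<dots> = (\<Sum>z\<in>Y. cnj (phi n k z c) * (\<Sum>e\<in>B. P b e * (1 * phi n k z e)))"
      by (subst sum.swap) (simp add: sum_distrib_left)
    also have "\<dots> = (\<Sum>z\<in>Y. cnj (phi n k z c) * mat_apply B P (\<lambda>b. 1 * phi n k z b) b)"
      unfolding mat_apply_def by simp
    also have "\<dots> = (\<Sum>z\<in>Y. cnj (phi n k z c) * phi n k z b)"
    proof (intro sum.cong refl)
      fix z assume zY: "z \<in> Y"
      then have "length z = k" unfolding Y_def by simp
      from fun_cong[OF matP[OF this, of 1], of b] zY
      have "mat_apply B P (\<lambda>b. 1 * phi n k z b) b = phi n k z b" by simp
      then show "cnj (phi n k z c) * mat_apply B P (\<lambda>b. 1 * phi n k z b) b = cnj (phi n k z c) * phi n k z b"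
        by simp
    qed
    also have "\<dots> = P b c" unfolding P_def by (simp add: mult.commute)
    finally show "(\<Sum>e\<in>B. P b e * P e c) = P b c" .
  qed
  have norm\<psi>: "sq_norm_on B \<psi> = 1"
    using norm1[OF _ hk, of Z 1] unfolding B_def \<psi>_def Z_def by simp
  have correct: "prob_outcome B P (apply_oracle x \<psi>) (f x) = 1" if lx: "length x = n" for x
  proof -
    define ph where "ph i = (if input_bit x i then -1 else 1::complex)" for i
    define yx where "yx = map (\<lambda>j. x ! j \<noteq> input_bit x n) [0..<k]"
    define \<sigma> where "\<sigma> = ph n ^ k"
    have lyx: "length yx = k" unfolding yx_def by simp
    have cs: "cmod \<sigma> = 1" unfolding \<sigma>_def ph_def by (simp add: norm_power)
    have orc: "apply_oracle x \<psi> b = \<sigma> * phi n k yx b" if "b \<in> B" for b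
    proof -
      obtain ks w where bw: "b = (ks, w)" by (cases b)
      have lis: "length ks = k" using that unfolding B_def bw qbasis_def by simp
      have "apply_oracle x \<psi> b = (\<Prod>j<k. ph (ks!j)) * (\<Prod>j<k. complex_of_real (ur n Z j (ks!j)))"
        unfolding apply_oracle_def bw oracle_phase_def prod_list_nth \<psi>_def phi_real ph_def
        using lis by simp
      also have "\<dots> = (\<Prod>j<k. ph (ks!j) * complex_of_real (ur n Z j (ks!j)))"
        by (simp add: prod.distrib)
      also have "\<dots> = (\<Prod>j<k. ph n * complex_of_real (ur n yx j (ks!j)))"
        unfolding ph_def using hk
        by (intro prod.cong refl factor_eq) (auto simp: Z_def yx_def)
      also have "\<dots> = \<sigma> * phi n k yx b"
        unfolding \<sigma>_def phi_real bw by (simp add: prod.distrib)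
      finally show ?thesis .
    qed
    have fx: "f x = g yx"
    proof (cases "n = 0")
      case True
      then show ?thesis using lx unfolding g_def yx_def k_def by simp
    next
      case False
      have tk: "take n (yx @ [False]) = yx @ [False]" using lyx False unfolding k_def by simp
      have ib: "input_bit x n = x ! (n - 1)" using False by (simp add: input_bit_def)
      show ?thesis
      proof (cases "input_bit x n")
        case False
        have "yx @ [False] = x"
        proof (rule nth_equalityI)
          show "length (yx @ [False]) = length x" using lyx lx \<open>n \<noteq> 0\<close> k_def by simp
          fix i assume "i < length (yx @ [False])"
          then have "i < k \<or> i = k" using lyx by auto
          then show "(yx @ [False]) ! i = x ! i"
            using False ib lyx unfolding yx_def k_def by (auto simp: nth_append)
        qed
        then show ?thesis unfolding g_def tk by simp
      next
        case True
        have "yx @ [False] = map Not x"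
        proof (rule nth_equalityI)
          show "length (yx @ [False]) = length (map Not x)" using lyx lx \<open>n \<noteq> 0\<close> k_def by simp
          fix i assume "i < length (yx @ [False])"
          then have "i < k \<or> i = k" using lyx by auto
          then show "(yx @ [False]) ! i = map Not x ! i"
            using True ib lyx lx \<open>n \<noteq> 0\<close> unfolding yx_def k_def by (auto simp: nth_append)
        qed
        moreover have "f x = f (map Not x)" using assms lx by blast
        ultimately show ?thesis unfolding g_def tk by simp
      qed
    qed
    have ma: "mat_apply B P (apply_oracle x \<psi>) = mat_apply B P (\<lambda>b. \<sigma> * phi n k yx b)"
      unfolding mat_apply_def using orc by (intro ext sum.cong) auto
    have nrm: "sq_norm_on B (\<lambda>b. \<sigma> * phi n k yx b) = 1"
      unfolding B_def by (rule norm1[OF lyx hk cs])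
    show ?thesis
    proof (cases "f x")
      case True
      then have "yx \<in> Y" using fx lyx unfolding Y_def by simp
      then have "sq_norm_on B (mat_apply B P (apply_oracle x \<psi>)) = 1"
        unfolding ma matP[OF lyx] using nrm by simp
      then show ?thesis using True by (simp add: prob_outcome_def)
    next
      case False
      then have "yx \<notin> Y" using fx unfolding Y_def by simp
      then have "sq_norm_on B (\<lambda>b. apply_oracle x \<psi> b - mat_apply B P (apply_oracle x \<psi>) b)
          = sq_norm_on B (\<lambda>b. \<sigma> * phi n k yx b)"
        unfolding ma matP[OF lyx] sq_norm_on_def using orc by (intro sum.cong) auto
      then show ?thesis using False nrm by (simp add: prob_outcome_def)
    qed
  qed
  have "na_exact_alg n f k 1 \<psi> P"
    unfolding na_exact_alg_def is_projector_def
    using norm\<psi> herm idem correct unfolding B_def by blast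
  then have "computes_na n f k" unfolding computes_na_def by blast
  then show ?thesis unfolding QE_na_def k_def by (rule Least_le)
qed

end
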